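(* Let $p\ge1$, let $\phi_1,\dots,\phi_p:\mathbb Z\to\mathbb C$, let $s\in\mathbb Z$ and $1\le m\le p$. Then the function $t\mapsto \xi^{(m)}_{t,s}$, $t\in\{s-p+1,s-p+2,\dots\}$, satisfies $$\xi^{(m)}_{t,s}=\sum_{l=1}^{p}\phi_l(t)\,\xi^{(m)}_{t-l,s}\quad\text{for all } t\ge s+1,$$ with initial values $\xi^{(m)}_{s-m+1,s}=1$ and $\xi^{(m)}_{s-i,s}=0$ for $0\le i\le p-1$, $i\ne m-1$.
   Context: Convention: $\phi_l(t)=0$ for $l>p$. For integers $t>s$ and $1\le m\le p$, $\Phi^{(m)}_{t,s}$ is the $(t-s)\times(t-s)$ lower Hessenberg matrix whose $(i,j)$ entry ($1\le i,j\le t-s$) is: $\phi_{m+i-1}(s+i)$ if $j=1$; $-1$ if $j=i+1$; $\phi_{i-j+1}(s+i)$ if $2\le j\le i$; $0$ if $j>i+1$. Define, for $t\ge s-p+1$: $\xi^{(m)}_{t,s}=\det\Phi^{(m)}_{t,s}$ if $t>s$; $\xi^{(m)}_{t,s}=1$ if $t=s-m+1$; $\xi^{(m)}_{t,s}=0$ if $s-p+1\le t\le s$ and $t\ne s-m+1$. *)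

theory Defs
  imports Main "Jordan_Normal_Form.Determinant"
begin

definition phic :: "nat \<Rightarrow> (nat \<Rightarrow> int \<Rightarrow> complex) \<Rightarrow> nat \<Rightarrow> int \<Rightarrow> complex" where
  "phic p \<phi> l t = (if 1 \<le> l \<and> l \<le> p then \<phi> l t else 0)"

text \<open>The (t-s)x(t-s) lower Hessenberg matrix Phi^(m)_{t,s}; entry (i,j) of the paper
  (1-based) is stored at position (i-1, j-1).\<close>
definition Phi_mat :: "nat \<Rightarrow> (nat \<Rightarrow> int \<Rightarrow> complex) \<Rightarrow> nat \<Rightarrow> int \<Rightarrow> int \<Rightarrow> complex mat" where
  "Phi_mat p \<phi> m t s = mat (nat (t - s)) (nat (t - s)) (\<lambda>(i0, j0).
     let i = i0 + 1; j = j0 + 1 in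
     if j = 1 then phic p \<phi> (m + i - 1) (s + int i)
     else if j = i + 1 then -1
     else if 2 \<le> j \<and> j \<le> i then phic p \<phi> (i - j + 1) (s + int i)
     else 0)"

definition xi :: "nat \<Rightarrow> (nat \<Rightarrow> int \<Rightarrow> complex) \<Rightarrow> nat \<Rightarrow> int \<Rightarrow> int \<Rightarrow> complex" where
  "xi p \<phi> m t s =
     (if t > s then det (Phi_mat p \<phi> m t s)
      else if t = s - int m + 1 then 1
      else 0)"

end

theory Submission
  imports Defs
begin

definition Hess :: "nat \<Rightarrow> (nat \<Rightarrow> nat \<Rightarrow> complex) \<Rightarrow> complex mat" where
 "Hess k a = mat k k (\<lambda>(i,j). if j \<le> i then a i j else if j = Suc i then -1 else 0)"

lemma Hess_carrier: "Hess k a \<in> carrier_mat k k" by (simp add: Hess_def)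

lemma Hess_cong: "j \<le> k \<Longrightarrow> (\<And>i l. i < j \<Longrightarrow> a' i l = a i l) \<Longrightarrow> Hess j a' = Hess j a"
  by (rule eq_matI) (auto simp: Hess_def)

lemma hess_rec: "det (Hess (Suc k) a) = (\<Sum>j\<le>k. a k j * det (Hess j a))"
proof (induction k arbitrary: a)
  case 0
  have "det (Hess 1 a) = (\<Sum>i<1. Hess 1 a $$ (i,0) * cofactor (Hess 1 a) i 0)"
    by (rule laplace_expansion_column[OF Hess_carrier]) simp
  also have "\<dots> = a 0 0"
    by (simp add: cofactor_def Hess_def mat_delete_def)
  finally show ?case by (simp add: Hess_def)
next
  case (Suc k)
  let ?H = "Hess (Suc (Suc k)) a"
  define a' where "a' = (\<lambda>i j. if i = k then a (Suc k) j else a i j)"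
  have d1: "mat_delete ?H (Suc k) (Suc k) = Hess (Suc k) a"
    by (rule eq_matI) (auto simp: Hess_def mat_delete_def)
  have d2: "mat_delete ?H k (Suc k) = Hess (Suc k) a'"
    by (rule eq_matI) (auto simp: Hess_def mat_delete_def a'_def)
  have "det ?H = (\<Sum>i<Suc (Suc k). ?H $$ (i, Suc k) * cofactor ?H i (Suc k))"
    by (rule laplace_expansion_column[OF Hess_carrier]) simp
  also have "\<dots> = (\<Sum>i<k. ?H $$ (i, Suc k) * cofactor ?H i (Suc k))
      + ?H $$ (k, Suc k) * cofactor ?H k (Suc k) + ?H $$ (Suc k, Suc k) * cofactor ?H (Suc k) (Suc k)"
    by simp
  also have "(\<Sum>i<k. ?H $$ (i, Suc k) * cofactor ?H i (Suc k)) = 0"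
    by (rule sum.neutral) (auto simp: Hess_def)
  also have "?H $$ (k, Suc k) * cofactor ?H k (Suc k) = det (Hess (Suc k) a')"
    unfolding cofactor_def d2 by (simp add: Hess_def)
  also have "?H $$ (Suc k, Suc k) * cofactor ?H (Suc k) (Suc k) = a (Suc k) (Suc k) * det (Hess (Suc k) a)"
    unfolding cofactor_def d1 by (simp add: Hess_def)
  also have "det (Hess (Suc k) a') = (\<Sum>j\<le>k. a (Suc k) j * det (Hess j a))"
    unfolding Suc.IH
    by (rule sum.cong) (auto simp: a'_def intro!: arg_cong[where f=det] Hess_cong[of _ k])
  finally show ?case by simp
qed

lemma xi_le: "t \<le> s \<Longrightarrow> xi p \<phi> m t s = (if t = s - int m + 1 then 1 else 0)"
  by (simp add: xi_def)

lemma Phi_eq: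
  "Phi_mat p \<phi> m (s + int n) s = Hess n (\<lambda>i j. if j = 0 then phic p \<phi> (m+i) (s + int i + 1)
       else phic p \<phi> (i-j+1) (s + int i + 1))"
  by (rule eq_matI) (auto simp: Phi_mat_def Hess_def Let_def add_ac)

theorem proposition1:
  fixes p m :: nat and \<phi> :: "nat \<Rightarrow> int \<Rightarrow> complex" and s :: int
  assumes "1 \<le> p" and "1 \<le> m" and "m \<le> p"
  shows "(\<forall>t. t \<ge> s + 1 \<longrightarrow>
            xi p \<phi> m t s = (\<Sum>l = 1..p. phic p \<phi> l t * xi p \<phi> m (t - int l) s))
       \<and> xi p \<phi> m (s - int m + 1) s = 1
       \<and> (\<forall>i::nat. i \<le> p - 1 \<and> i \<noteq> m - 1 \<longrightarrow> xi p \<phi> m (s - int i) s = 0)"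
proof (intro conjI allI impI)
  show "xi p \<phi> m (s - int m + 1) s = 1" using assms by (simp add: xi_def)
next
  fix i :: nat assume "i \<le> p - 1 \<and> i \<noteq> m - 1"
  then have "s - int i \<noteq> s - int m + 1" using assms by linarith
  then show "xi p \<phi> m (s - int i) s = 0" by (simp add: xi_def)
next
  fix t assume t: "s + 1 \<le> t"
  define a where "a = (\<lambda>i j. if j = 0 then phic p \<phi> (m+i) (s + int i + 1)
       else phic p \<phi> (i-j+1) (s + int i + 1))"
  obtain k where k: "t = s + int (Suc k)" using t
    by (intro that[of "nat (t - s - 1)"]) simp
  have xpos: "xi p \<phi> m (s + int j) s = det (Hess j a)" if "j \<ge> 1" for j
    using that unfolding a_def Phi_eq[symmetric] by (simp add: xi_def)
  define f where "f = (\<lambda>l. phic p \<phi> l t * xi p \<phi> m (t - int l) s)"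
  have "xi p \<phi> m t s = (\<Sum>j\<le>k. a k j * det (Hess j a))"
    using xpos[of "Suc k"] k hess_rec by simp
  also have "\<dots> = a k 0 * det (Hess 0 a) + (\<Sum>j\<in>{1..k}. a k j * det (Hess j a))"
  proof -
    have "{..k} = insert 0 {1..k}" by auto
    then show ?thesis by simp
  qed
  also have "\<dots> = phic p \<phi> (m+k) t + (\<Sum>j\<in>{1..k}. phic p \<phi> (k+1-j) t * xi p \<phi> m (s + int j) s)"
  proof -
    have "a k 0 = phic p \<phi> (m+k) t" by (simp add: a_def k add_ac)
    moreover have "det (Hess 0 a) = 1" by (simp add: Hess_def)
    moreover have "a k j * det (Hess j a) = phic p \<phi> (k+1-j) t * xi p \<phi> m (s + int j) s"
      if "j \<in> {1..k}" for j
    proof -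
      have "a k j = phic p \<phi> (k+1-j) t" using that by (simp add: a_def k Suc_diff_le add_ac)
      then show ?thesis using that xpos[of j] by simp
    qed
    ultimately show ?thesis by (metis (no_types, lifting) mult_1_right sum.cong)
  qed
  also have "(\<Sum>j\<in>{1..k}. phic p \<phi> (k+1-j) t * xi p \<phi> m (s + int j) s) = sum f {1..k}"
    unfolding f_def
    by (rule sum.reindex_bij_witness[where i="\<lambda>l. k+1-l" and j="\<lambda>j. k+1-j"]) (auto simp: k)
  also have "phic p \<phi> (m+k) t = sum f {Suc k..p + Suc k}"
  proof -
    have "sum f {Suc k..p + Suc k} = (\<Sum>l\<in>{Suc k..p + Suc k}. if l = m + k then phic p \<phi> l t else 0)"
      by (rule sum.cong) (auto simp: f_def k xi_le)
    also have "\<dots> = phic p \<phi> (m+k) t" using assms by (simp add: sum.delta)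
    finally show ?thesis by simp
  qed
  also have "sum f {Suc k..p + Suc k} + sum f {1..k} = sum f {1..p + Suc k}"
  proof -
    have "{1..p + Suc k} = {1..k} \<union> {Suc k..p + Suc k}" by auto
    then show ?thesis by (simp add: sum.union_disjoint add.commute)
  qed
  also have "sum f {1..p + Suc k} = sum f {1..p}"
    by (rule sum.mono_neutral_right) (auto simp: f_def phic_def)
  finally show "xi p \<phi> m t s = (\<Sum>l = 1..p. phic p \<phi> l t * xi p \<phi> m (t - int l) s)"
    by (simp add: f_def)
qed

end
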